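(* Let $\langle\nabla_1,t_1\rangle$ and $\langle\nabla_2,t_2\rangle$ be terms-in-context such that $t_1,\nabla_1$ and $t_2,\nabla_2$ have disjoint sets of variables. Then $\langle\nabla_1,t_1\rangle$ and $\langle\nabla_2,t_2\rangle$ are joinable, i.e. there exists a term-in-context $\langle\Gamma,s\rangle$ with $\langle\nabla_1,t_1\rangle\preceq\langle\Gamma,s\rangle$ and $\langle\nabla_2,t_2\rangle\preceq\langle\Gamma,s\rangle$, if and only if the nominal unification problem $\{t_1\approx^? t_2\}\cup\nabla_1\cup\nabla_2$ has a solution, i.e. there exist a freshness context $\Gamma$ and a substitution $\sigma$ with $\Gamma\vdash t_1\sigma\approx t_2\sigma$ and $\Gamma\vdash a\# X\sigma$ for every $a\# X\in\nabla_1\cup\nabla_2$.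
   Context: Nominal terms $t::=f(t_1,\dots,t_n)\mid a\mid a.t\mid \pi\cdot X$ over sorted atoms $a,b,\dots$, variables $X,Y,\dots$ and function symbols; $\pi$ ranges over permutations (finite sequences of swappings $(a\,b)$ of same-sorted atoms, inverse = reversed sequence), $\pi\bullet t$ is the swapping action ($(a\,b)$ exchanges $a$ and $b$ everywhere and $(a\,b)\bullet(\pi\cdot X)=((a\,b)\pi)\cdot X$). Substitutions $\sigma$ map variables to terms of the same sort; application $t\sigma$ allows atom capture and $(\pi\cdot X)\sigma=\pi\bullet(X\sigma)$. A freshness context is a finite set of constraints $a\# X$. Judgments: $\nabla\vdash a\approx a$; $\nabla\vdash a.t\approx a.t'$ if $\nabla\vdash t\approx t'$; $\nabla\vdash a.t\approx a'.t'$ if $a\neq a'$, $\nabla\vdash t\approx(a\,a')\bullet t'$ and $\nabla\vdash a\# t'$; $\nabla\vdash\pi\cdot X\approx\pi'\cdot X$ if $a\# X\in\nabla$ for all $a$ with $\pi\bullet a\neq\pi'\bullet a$; $\nabla\vdash f(t_1,..,t_n)\approx f(t'_1,..,t'_n)$ if $\nabla\vdash t_i\approx t'_i$ for all $i$; $\nabla\vdash a\# a'$ if $a\ne a'$; $\nabla\vdash a\#\pi\cdot X$ if $\pi^{-1}\bullet a\# X\in\nabla$; $\nabla\vdash a\# f(t_1,..,t_n)$ if $\nabla\vdash a\# t_i$ for all $i$; $\nabla\vdash a\# a.t$; $\nabla\vdash a\# a'.t$ if $a\ne a'$ and $\nabla\vdash a\# t$. The algorithm ${\sf FC}$ on a finite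 set $F$ of formulas $a\# t$: starting from $F;\emptyset$, apply as long as possible: $\{a\# b\}\uplus F';\Delta\Rightarrow F';\Delta$ if $a\neq b$; $\{a\# a.t\}\uplus F';\Delta\Rightarrow F';\Delta$; $\{a\# b.t\}\uplus F';\Delta\Rightarrow\{a\# t\}\cup F';\Delta$ if $a\neq b$; $\{a\# f(t_1,\dots,t_n)\}\uplus F';\Delta\Rightarrow \{a\# t_1,\dots,a\# t_n\}\cup F';\Delta$; $\{a\#\pi\cdot X\}\uplus F';\Delta\Rightarrow F';\{\pi^{-1}\bullet a\# X\}\cup\Delta$; the result is $\Delta$ if the terminal state is $\emptyset;\Delta$ and $\bot$ if it contains some $a\# a$. $\nabla\sigma:={\sf FC}(\{a\# X\sigma\mid a\# X\in\nabla\})$. $\sigma$ respects $\nabla$ if for every $X$, no atom $a$ with $a\# X\in\nabla$ occurs free in $X\sigma$ outside of suspensions. A term-in-context is a pair $\langle\nabla,t\rangle$; $\langle\nabla_1,t_1\rangle\preceq\langle\nabla_2,t_2\rangle$ if there is a substitution $\sigma$ respecting $\nabla_1$ with $\nabla_1\sigma\subseteq\nabla_2$ and $\nabla_2\vdash t_1\sigma\approx t_2$. *)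

theory Defs
  imports Main
begin

text \<open>Atoms of type 'a, variables of type 'v, function symbols of type 'f, sorts of type 's.
  The sort discipline is kept abstract: a sort signature assigns sorts to atoms and variables,
  an arity (argument sorts, result sort) to every function symbol, and tells what the sort of
  an abstraction a.t is, given the sort of a and the sort of t.\<close>

record ('a, 'v, 'f, 's) sortsig =
  asort :: "'a \<Rightarrow> 's"
  vsort :: "'v \<Rightarrow> 's"
  fsig  :: "'f \<Rightarrow> 's list \<times> 's"
  abss  :: "'s \<Rightarrow> 's \<Rightarrow> 's"

datatype ('a, 'v, 'f) trm =
    Fn 'f "('a, 'v, 'f) trm list"
  | At 'a
  | Ab 'a "('a, 'v, 'f) trm"
  | Susp "('a \<times> 'a) list" 'v

text \<open>Permutations are finite lists of swappings; [(a1,b1),...,(an,bn)] denotes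
  (a1 b1)...(an bn), acting on an atom by applying the rightmost swapping first.\<close>

type_synonym 'a perm = "('a \<times> 'a) list"

definition swap_atom :: "'a \<Rightarrow> 'a \<Rightarrow> 'a \<Rightarrow> 'a" where
  "swap_atom a b c = (if c = a then b else if c = b then a else c)"

definition perm_atom :: "'a perm \<Rightarrow> 'a \<Rightarrow> 'a" where
  "perm_atom \<pi> c = foldr (\<lambda>(a, b) x. swap_atom a b x) \<pi> c"

definition perm_inv :: "'a perm \<Rightarrow> 'a perm" where
  "perm_inv \<pi> = rev \<pi>"

fun perm_trm :: "'a perm \<Rightarrow> ('a, 'v, 'f) trm \<Rightarrow> ('a, 'v, 'f) trm" where
  "perm_trm \<pi> (Fn f ts) = Fn f (map (perm_trm \<pi>) ts)"
| "perm_trm \<pi> (At a) = At (perm_atom \<pi> a)"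
| "perm_trm \<pi> (Ab a t) = Ab (perm_atom \<pi> a) (perm_trm \<pi> t)"
| "perm_trm \<pi> (Susp \<pi>' X) = Susp (\<pi> @ \<pi>') X"

inductive wsorted :: "('a, 'v, 'f, 's) sortsig \<Rightarrow> ('a, 'v, 'f) trm \<Rightarrow> 's \<Rightarrow> bool"
  for \<Sigma> :: "('a, 'v, 'f, 's) sortsig" where
  ws_at: "wsorted \<Sigma> (At a) (asort \<Sigma> a)"
| ws_ab: "wsorted \<Sigma> t s \<Longrightarrow> wsorted \<Sigma> (Ab a t) (abss \<Sigma> (asort \<Sigma> a) s)"
| ws_fn: "fsig \<Sigma> f = (ss, s) \<Longrightarrow> list_all2 (wsorted \<Sigma>) ts ss \<Longrightarrow> wsorted \<Sigma> (Fn f ts) s"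
| ws_susp: "(\<forall>(a, b) \<in> set \<pi>. asort \<Sigma> a = asort \<Sigma> b) \<Longrightarrow>
            wsorted \<Sigma> (Susp \<pi> X) (vsort \<Sigma> X)"

text \<open>Substitutions map variables to (well-sorted) terms of the same sort;
  application allows atom capture and (\<pi>\<cdot>X)\<sigma> = \<pi>\<bullet>(X\<sigma>).\<close>

type_synonym ('a, 'v, 'f) subst = "'v \<Rightarrow> ('a, 'v, 'f) trm"

definition is_subst :: "('a, 'v, 'f, 's) sortsig \<Rightarrow> ('a, 'v, 'f) subst \<Rightarrow> bool" where
  "is_subst \<Sigma> \<sigma> \<longleftrightarrow> (\<forall>X. wsorted \<Sigma> (\<sigma> X) (vsort \<Sigma> X))"

fun subst_trm :: "('a, 'v, 'f) subst \<Rightarrow> ('a, 'v, 'f) trm \<Rightarrow> ('a, 'v, 'f) trm" where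
  "subst_trm \<sigma> (Fn f ts) = Fn f (map (subst_trm \<sigma>) ts)"
| "subst_trm \<sigma> (At a) = At a"
| "subst_trm \<sigma> (Ab a t) = Ab a (subst_trm \<sigma> t)"
| "subst_trm \<sigma> (Susp \<pi> X) = perm_trm \<pi> (\<sigma> X)"

fun vars_trm :: "('a, 'v, 'f) trm \<Rightarrow> 'v set" where
  "vars_trm (Fn f ts) = (\<Union>t \<in> set ts. vars_trm t)"
| "vars_trm (At a) = {}"
| "vars_trm (Ab a t) = vars_trm t"
| "vars_trm (Susp \<pi> X) = {X}"

text \<open>Atoms occurring free outside of suspensions.\<close>

fun fa_ns :: "('a, 'v, 'f) trm \<Rightarrow> 'a set" where
  "fa_ns (Fn f ts) = (\<Union>t \<in> set ts. fa_ns t)"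
| "fa_ns (At a) = {a}"
| "fa_ns (Ab a t) = fa_ns t - {a}"
| "fa_ns (Susp \<pi> X) = {}"

text \<open>A freshness constraint a#X is the pair (a, X); a freshness context is a finite set of them.\<close>

type_synonym ('a, 'v) fctx = "('a \<times> 'v) set"

definition vars_ctx :: "('a, 'v) fctx \<Rightarrow> 'v set" where
  "vars_ctx N = snd ` N"

inductive fresh :: "('a, 'v) fctx \<Rightarrow> 'a \<Rightarrow> ('a, 'v, 'f) trm \<Rightarrow> bool"
  for N :: "('a, 'v) fctx" where
  fr_at: "a \<noteq> a' \<Longrightarrow> fresh N a (At a')"
| fr_susp: "(perm_atom (perm_inv \<pi>) a, X) \<in> N \<Longrightarrow> fresh N a (Susp \<pi> X)"
| fr_fn: "(\<forall>t \<in> set ts. fresh N a t) \<Longrightarrow> fresh N a (Fn f ts)"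
| fr_ab_eq: "fresh N a (Ab a t)"
| fr_ab: "a \<noteq> a' \<Longrightarrow> fresh N a t \<Longrightarrow> fresh N a (Ab a' t)"

inductive aeq :: "('a, 'v) fctx \<Rightarrow> ('a, 'v, 'f) trm \<Rightarrow> ('a, 'v, 'f) trm \<Rightarrow> bool"
  for N :: "('a, 'v) fctx" where
  aeq_at: "aeq N (At a) (At a)"
| aeq_ab_eq: "aeq N t t' \<Longrightarrow> aeq N (Ab a t) (Ab a t')"
| aeq_ab: "a \<noteq> a' \<Longrightarrow> aeq N t (perm_trm [(a, a')] t') \<Longrightarrow> fresh N a t' \<Longrightarrow>
           aeq N (Ab a t) (Ab a' t')"
| aeq_susp: "(\<forall>a. perm_atom \<pi> a \<noteq> perm_atom \<pi>' a \<longrightarrow> (a, X) \<in> N) \<Longrightarrow>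
             aeq N (Susp \<pi> X) (Susp \<pi>' X)"
| aeq_fn: "list_all2 (aeq N) ts ts' \<Longrightarrow> aeq N (Fn f ts) (Fn f ts')"

text \<open>Result of running FC on the single formula a#t: None encodes \<bottom>, Some \<Delta> the
  resulting freshness context.\<close>

fun fc1 :: "'a \<Rightarrow> ('a, 'v, 'f) trm \<Rightarrow> ('a, 'v) fctx option"
and fc1_list :: "'a \<Rightarrow> ('a, 'v, 'f) trm list \<Rightarrow> ('a, 'v) fctx option" where
  "fc1 a (At b) = (if a = b then None else Some {})"
| "fc1 a (Ab b t) = (if a = b then Some {} else fc1 a t)"
| "fc1 a (Fn f ts) = fc1_list a ts"
| "fc1 a (Susp \<pi> X) = Some {(perm_atom (perm_inv \<pi>) a, X)}"
| "fc1_list a [] = Some {}"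
| "fc1_list a (t # ts) =
     (case (fc1 a t, fc1_list a ts) of
        (Some \<Delta>1, Some \<Delta>2) \<Rightarrow> Some (\<Delta>1 \<union> \<Delta>2)
      | _ \<Rightarrow> None)"

definition FC :: "('a \<times> ('a, 'v, 'f) trm) set \<Rightarrow> ('a, 'v) fctx option" where
  "FC F = (if \<exists>(a, t) \<in> F. fc1 a t = None then None
           else Some (\<Union>(a, t) \<in> F. the (fc1 a t)))"

definition ctx_subst :: "('a, 'v) fctx \<Rightarrow> ('a, 'v, 'f) subst \<Rightarrow> ('a, 'v) fctx option" where
  "ctx_subst N \<sigma> = FC ((\<lambda>(a, X). (a, \<sigma> X)) ` N)"

definition respects_ctx :: "('a, 'v, 'f) subst \<Rightarrow> ('a, 'v) fctx \<Rightarrow> bool" where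
  "respects_ctx \<sigma> N \<longleftrightarrow> (\<forall>(a, X) \<in> N. a \<notin> fa_ns (\<sigma> X))"

definition term_in_ctx :: "('a, 'v, 'f, 's) sortsig \<Rightarrow> ('a, 'v) fctx \<Rightarrow> ('a, 'v, 'f) trm \<Rightarrow> bool" where
  "term_in_ctx \<Sigma> N t \<longleftrightarrow> finite N \<and> (\<exists>s. wsorted \<Sigma> t s)"

definition tic_le ::
  "('a, 'v, 'f, 's) sortsig \<Rightarrow> ('a, 'v) fctx \<times> ('a, 'v, 'f) trm \<Rightarrow> ('a, 'v) fctx \<times> ('a, 'v, 'f) trm \<Rightarrow> bool" where
  "tic_le \<Sigma> P Q \<longleftrightarrow> (case (P, Q) of ((N1, t1), (N2, t2)) \<Rightarrow>
     (\<exists>\<sigma>. is_subst \<Sigma> \<sigma> \<and> respects_ctx \<sigma> N1 \<and>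
          (\<exists>\<Delta>. ctx_subst N1 \<sigma> = Some \<Delta> \<and> \<Delta> \<subseteq> N2) \<and>
          aeq N2 (subst_trm \<sigma> t1) t2))"

definition joinable ::
  "('a, 'v, 'f, 's) sortsig \<Rightarrow> ('a, 'v) fctx \<times> ('a, 'v, 'f) trm \<Rightarrow> ('a, 'v) fctx \<times> ('a, 'v, 'f) trm \<Rightarrow> bool" where
  "joinable \<Sigma> P Q \<longleftrightarrow> (\<exists>G s. term_in_ctx \<Sigma> G s \<and> tic_le \<Sigma> P (G, s) \<and> tic_le \<Sigma> Q (G, s))"

definition nom_unif_solvable ::
  "('a, 'v, 'f, 's) sortsig \<Rightarrow> ('a, 'v, 'f) trm \<Rightarrow> ('a, 'v, 'f) trm \<Rightarrow> ('a, 'v) fctx \<Rightarrow> bool" where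
  "nom_unif_solvable \<Sigma> t1 t2 N \<longleftrightarrow>
     (\<exists>G \<sigma>. finite G \<and> is_subst \<Sigma> \<sigma> \<and> aeq G (subst_trm \<sigma> t1) (subst_trm \<sigma> t2) \<and>
             (\<forall>(a, X) \<in> N. fresh G a (\<sigma> X)))"

end

theory Submission
  imports Defs
begin

lemma perm_atom_Nil[simp]: "perm_atom [] c = c"
  by (simp add: perm_atom_def)
lemma perm_atom_Cons[simp]: "perm_atom ((a,b)#\<pi>) c = swap_atom a b (perm_atom \<pi> c)"
  by (simp add: perm_atom_def)
lemma perm_atom_append[simp]: "perm_atom (\<pi>@\<pi>') c = perm_atom \<pi> (perm_atom \<pi>' c)"
  by (simp add: perm_atom_def)
lemma swap_atom_inv[simp]: "swap_atom a b (swap_atom a b c) = c"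
  by (simp add: swap_atom_def)
lemma swap_atom_inj[simp]: "swap_atom a b c = swap_atom a b d \<longleftrightarrow> c = d"
  by (auto simp add: swap_atom_def)
lemma perm_inv_Cons[simp]: "perm_inv ((a,b)#\<pi>) = perm_inv \<pi> @ [(a,b)]"
  by (simp add: perm_inv_def)
lemma perm_inv_append[simp]: "perm_inv (\<pi>@\<pi>') = perm_inv \<pi>' @ perm_inv \<pi>"
  by (simp add: perm_inv_def)
lemma perm_inv_Nil[simp]: "perm_inv [] = []"
  by (simp add: perm_inv_def)
lemma perm_inv_left[simp]: "perm_atom (perm_inv \<pi>) (perm_atom \<pi> c) = c"
  by (induction \<pi> arbitrary: c) auto
lemma perm_inv_right[simp]: "perm_atom \<pi> (perm_atom (perm_inv \<pi>) c) = c"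
  by (induction \<pi> arbitrary: c) auto
lemma perm_atom_inj[simp]: "perm_atom \<pi> c = perm_atom \<pi> d \<longleftrightarrow> c = d"
  by (metis perm_inv_left)
lemma perm_inv_eq: "perm_atom (perm_inv \<pi>) a = b \<longleftrightarrow> a = perm_atom \<pi> b"
  by (metis perm_inv_left perm_inv_right)
lemma perm_inv_fun: "perm_atom \<pi> = perm_atom \<pi>' \<Longrightarrow> perm_atom (perm_inv \<pi>) = perm_atom (perm_inv \<pi>')"
  by (rule ext) (metis perm_inv_left perm_inv_right)

lemma perm_trm_append: "perm_trm (\<pi>@\<pi>') t = perm_trm \<pi> (perm_trm \<pi>' t)"
  by (induction t) auto
lemma perm_trm_Nil[simp]: "perm_trm [] t = t"
  by (induction t) (auto simp: map_idI)

lemma fresh_At[simp]: "fresh N a (At b) \<longleftrightarrow> a \<noteq> b"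
  by (auto elim: fresh.cases intro: fresh.intros)
lemma fresh_Susp[simp]: "fresh N a (Susp \<pi> X) \<longleftrightarrow> (perm_atom (perm_inv \<pi>) a, X) \<in> N"
  by (auto elim: fresh.cases intro: fresh.intros)
lemma fresh_Fn[simp]: "fresh N a (Fn f ts) \<longleftrightarrow> (\<forall>t\<in>set ts. fresh N a t)"
  by (auto elim: fresh.cases intro: fresh.intros)
lemma fresh_Ab[simp]: "fresh N a (Ab b t) \<longleftrightarrow> a = b \<or> fresh N a t"
  by (auto elim: fresh.cases intro: fresh.intros)

lemma fresh_perm: "fresh N a (perm_trm \<pi> t) \<longleftrightarrow> fresh N (perm_atom (perm_inv \<pi>) a) t"
  by (induction t arbitrary: a) (auto simp: perm_inv_eq)
lemma fresh_perm2[simp]: "fresh N (perm_atom \<pi> a) (perm_trm \<pi> t) \<longleftrightarrow> fresh N a t"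
  by (simp add: fresh_perm)

inductive weq :: "('a, 'v, 'f) trm \<Rightarrow> ('a, 'v, 'f) trm \<Rightarrow> bool" where
  "weq (At a) (At a)"
| "weq t t' \<Longrightarrow> weq (Ab a t) (Ab a t')"
| "perm_atom \<pi> = perm_atom \<pi>' \<Longrightarrow> weq (Susp \<pi> X) (Susp \<pi>' X)"
| "list_all2 weq ts ts' \<Longrightarrow> weq (Fn f ts) (Fn f ts')"

inductive_cases weq_AtE: "weq (At a) u"
inductive_cases weq_AbE: "weq (Ab a t) u"
inductive_cases weq_SuspE: "weq (Susp \<pi> X) u"
inductive_cases weq_FnE: "weq (Fn f ts) u"

lemma weq_refl: "weq t t"
  by (induction t) (auto intro: weq.intros list.rel_refl_strong)

lemma weq_perm: "weq t t' \<Longrightarrow> perm_atom \<pi> = perm_atom \<pi>' \<Longrightarrow> weq (perm_trm \<pi> t) (perm_trm \<pi>' t')"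
proof (induction t t' rule: weq.induct)
  case (1 a)
  then show ?case by (simp add: weq.intros)
next
  case (2 t t' a)
  then show ?case by (simp add: weq.intros)
next
  case (3 \<pi>1 \<pi>1' X)
  then show ?case by (auto intro!: weq.intros ext)
next
  case (4 ts ts' f)
  then show ?case by (auto intro!: weq.intros simp: list_all2_map1 list_all2_map2 elim: list_all2_mono)
qed

lemma fresh_weq: "weq t t' \<Longrightarrow> fresh N a t \<Longrightarrow> fresh N a t'"
proof (induction t t' arbitrary: a rule: weq.induct)
  case (3 \<pi> \<pi>' X)
  then show ?case using perm_inv_fun[OF 3(1)] by simp
next
  case (4 ts ts' f)
  then show ?case by (auto simp: list_all2_conv_all_nth in_set_conv_nth) (metis nth_mem)
qed auto

inductive_cases aeq_AtE: "aeq N (At a) u"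
inductive_cases aeq_AbE: "aeq N (Ab a t) u"
inductive_cases aeq_SuspE: "aeq N (Susp \<pi> X) u"
inductive_cases aeq_FnE: "aeq N (Fn f ts) u"

lemma aeq_weq: "aeq N t t' \<Longrightarrow> weq t u \<Longrightarrow> weq t' u' \<Longrightarrow> aeq N u u'"
proof (induction t t' arbitrary: u u' rule: aeq.induct)
  case (aeq_at a)
  then show ?case by (auto elim!: weq_AtE intro: aeq.intros)
next
  case (aeq_ab_eq t t' a)
  then show ?case by (auto elim!: weq_AbE intro: aeq.intros)
next
  case (aeq_ab a a' t t')
  from aeq_ab(5) obtain s where u: "u = Ab a s" "weq t s" by (auto elim: weq_AbE)
  from aeq_ab(6) obtain s' where u': "u' = Ab a' s'" "weq t' s'" by (auto elim: weq_AbE)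
  have "weq (perm_trm [(a, a')] t') (perm_trm [(a, a')] s')"
    using u'(2) by (rule weq_perm) simp
  have "aeq N s (perm_trm [(a, a')] s')" using aeq_ab.IH u(2) \<open>weq (perm_trm [(a, a')] t') _\<close> by blast
  moreover have "fresh N a s'" using fresh_weq[OF u'(2)] aeq_ab.hyps by blast
  ultimately show ?case unfolding u u' using aeq_ab(1) by (rule aeq.aeq_ab[rotated])
next
  case (aeq_susp \<pi> \<pi>' X)
  from aeq_susp(2) obtain \<rho> where u: "u = Susp \<rho> X" "perm_atom \<pi> = perm_atom \<rho>" by (auto elim: weq_SuspE)
  from aeq_susp(3) obtain \<rho>' where u': "u' = Susp \<rho>' X" "perm_atom \<pi>' = perm_atom \<rho>'" by (auto elim: weq_SuspE)
  show ?case unfolding u u' using aeq_susp(1) u(2) u'(2) by (intro aeq.aeq_susp) metis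
next
  case (aeq_fn ts ts' f)
  from aeq_fn(2) obtain us where u: "u = Fn f us" "list_all2 weq ts us" by (auto elim: weq_FnE)
  from aeq_fn(3) obtain us' where u': "u' = Fn f us'" "list_all2 weq ts' us'" by (auto elim: weq_FnE)
  have "list_all2 (aeq N) us us'"
    using aeq_fn(1) u(2) u'(2) unfolding list_all2_conv_all_nth by simp
  then show ?case unfolding u u' by (rule aeq.aeq_fn)
qed

lemma swap_perm: "perm_atom \<pi> (swap_atom a b x) = swap_atom (perm_atom \<pi> a) (perm_atom \<pi> b) (perm_atom \<pi> x)"
  by (simp add: swap_atom_def)

lemma aeq_fresh: "aeq N t t' \<Longrightarrow> fresh N c t \<Longrightarrow> fresh N c t'"
proof (induction t t' arbitrary: c rule: aeq.induct)
  case (aeq_ab a a' t t')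
  show ?case
  proof (cases "c = a' \<or> c = a")
    case True
    then show ?thesis using aeq_ab.hyps by auto
  next
    case False
    then have "fresh N c t" using aeq_ab.prems by simp
    then have "fresh N c (perm_trm [(a, a')] t')" using aeq_ab.IH by blast
    then have "fresh N c t'" using False by (simp add: fresh_perm perm_inv_def swap_atom_def)
    then show ?thesis by simp
  qed
next
  case (aeq_susp \<pi> \<pi>' X)
  define b where "b = perm_atom (perm_inv \<pi>') c"
  show ?case
  proof (cases "perm_atom \<pi> b = c")
    case True
    then have "perm_atom (perm_inv \<pi>) c = b" by (simp add: perm_inv_eq)
    then show ?thesis using aeq_susp.prems b_def by simp
  next
    case False
    have "perm_atom \<pi>' b = c" by (simp add: b_def)
    then have "(b, X) \<in> N" using aeq_susp.hyps False by metis
    then show ?thesis by (simp add: b_def)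
  qed
next
  case (aeq_fn ts ts' f)
  then show ?case by (auto simp: list_all2_conv_all_nth in_set_conv_nth) (metis nth_mem)
qed auto

lemma aeq_perm: "aeq N t t' \<Longrightarrow> aeq N (perm_trm \<pi> t) (perm_trm \<pi> t')"
proof (induction t t' rule: aeq.induct)
  case (aeq_at a)
  then show ?case by (simp add: aeq.intros)
next
  case (aeq_ab_eq t t' a)
  then show ?case by (simp add: aeq.intros)
next
  case (aeq_ab a a' t t')
  have w: "weq (perm_trm \<pi> (perm_trm [(a, a')] t')) (perm_trm [(perm_atom \<pi> a, perm_atom \<pi> a')] (perm_trm \<pi> t'))"
    unfolding perm_trm_append[symmetric] by (rule weq_perm[OF weq_refl]) (auto simp: swap_perm)
  have "aeq N (perm_trm \<pi> t) (perm_trm [(perm_atom \<pi> a, perm_atom \<pi> a')] (perm_trm \<pi> t'))"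
    by (rule aeq_weq[OF aeq_ab.IH weq_refl w])
  moreover have "fresh N (perm_atom \<pi> a) (perm_trm \<pi> t')" using aeq_ab.hyps by simp
  ultimately show ?case using aeq_ab.hyps by (simp add: aeq.aeq_ab)
next
  case (aeq_susp \<pi>1 \<pi>1' X)
  then show ?case by (auto intro!: aeq.intros)
next
  case (aeq_fn ts ts' f)
  then show ?case by (auto intro!: aeq.intros simp: list_all2_map1 list_all2_map2 elim: list_all2_mono)
qed

lemma aeq_ds: "(\<forall>a. perm_atom \<pi> a \<noteq> perm_atom \<pi>' a \<longrightarrow> fresh N a t) \<Longrightarrow> aeq N (perm_trm \<pi> t) (perm_trm \<pi>' t)"
proof (induction t arbitrary: \<pi> \<pi>')
  case (Fn f ts)
  then show ?case by (auto intro!: aeq.intros simp: list_all2_map1 list_all2_map2 intro!: list.rel_refl_strong)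
next
  case (At x)
  then have "perm_atom \<pi> x = perm_atom \<pi>' x" by auto
  then show ?case by (simp add: aeq.aeq_at)
next
  case (Ab b t)
  show ?case
  proof (cases "perm_atom \<pi> b = perm_atom \<pi>' b")
    case True
    have "aeq N (perm_trm \<pi> t) (perm_trm \<pi>' t)"
      using Ab.prems True by (intro Ab.IH) (metis fresh_Ab)
    then show ?thesis using True by (simp add: aeq.intros)
  next
    case False
    define c where "c = perm_atom (perm_inv \<pi>') (perm_atom \<pi> b)"
    have c1: "perm_atom \<pi>' c = perm_atom \<pi> b" by (simp add: c_def)
    then have "c \<noteq> b" using False by auto
    moreover have "perm_atom \<pi> c \<noteq> perm_atom \<pi>' c" using c1 \<open>c \<noteq> b\<close> by simp
    ultimately have "fresh N c t" using Ab.prems by auto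
    then have fr: "fresh N (perm_atom \<pi> b) (perm_trm \<pi>' t)" by (simp add: fresh_perm c_def)
    have "aeq N (perm_trm \<pi> t) (perm_trm ([(perm_atom \<pi> b, perm_atom \<pi>' b)] @ \<pi>') t)"
    proof (rule Ab.IH, intro allI impI)
      fix a assume a: "perm_atom \<pi> a \<noteq> perm_atom ([(perm_atom \<pi> b, perm_atom \<pi>' b)] @ \<pi>') a"
      then have "a \<noteq> b" by (auto simp: swap_atom_def split: if_splits)
      have "perm_atom \<pi> a \<noteq> perm_atom \<pi>' a"
        using a \<open>a \<noteq> b\<close> by (auto simp: swap_atom_def split: if_splits)
      then show "fresh N a t" using Ab.prems \<open>a \<noteq> b\<close> by auto
    qed
    then have "aeq N (perm_trm \<pi> t) (perm_trm [(perm_atom \<pi> b, perm_atom \<pi>' b)] (perm_trm \<pi>' t))"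
      by (simp only: perm_trm_append)
    then show ?thesis using False fr by (simp add: aeq.aeq_ab)
  qed
next
  case (Susp \<sigma> X)
  then show ?case by (auto intro!: aeq.intros simp: perm_inv_eq)
qed

lemma aeq_Ab_iff: "aeq N (Ab a t) (Ab b t') \<longleftrightarrow>
   (a = b \<and> aeq N t t') \<or> (a \<noteq> b \<and> aeq N t (perm_trm [(a, b)] t') \<and> fresh N a t')"
  by (auto elim: aeq_AbE intro: aeq.intros)

lemma weq_swap_swap: "weq (perm_trm [(a, b)] (perm_trm [(a, b)] t)) t"
proof -
  have w: "weq (perm_trm ([(a, b)] @ [(a, b)]) t) (perm_trm [] t)"
    by (rule weq_perm[OF weq_refl]) (simp add: fun_eq_iff)
  then show ?thesis by (simp only: perm_trm_append perm_trm_Nil)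
qed

lemma aeq_sym: "aeq N t t' \<Longrightarrow> aeq N t' t"
proof (induction t t' rule: aeq.induct)
  case (aeq_at a)
  then show ?case by (simp add: aeq.intros)
next
  case (aeq_ab_eq t t' a)
  then show ?case by (simp add: aeq.intros)
next
  case (aeq_ab a a' t t')
  have "aeq N (perm_trm [(a, a')] (perm_trm [(a, a')] t')) (perm_trm [(a, a')] t)"
    using aeq_perm[OF aeq_ab.IH] .
  then have h: "aeq N t' (perm_trm [(a, a')] t)"
    by (rule aeq_weq[OF _ weq_swap_swap weq_refl])
  have w: "weq (perm_trm [(a, a')] t) (perm_trm [(a', a)] t)"
    by (rule weq_perm[OF weq_refl]) (auto simp: swap_atom_def)
  have h2: "aeq N t' (perm_trm [(a', a)] t)" by (rule aeq_weq[OF h weq_refl w])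
  have "fresh N (perm_atom [(a, a')] a) (perm_trm [(a, a')] t')"
    using aeq_ab.hyps by (simp only: fresh_perm2)
  then have "fresh N a' (perm_trm [(a, a')] t')" by (simp add: swap_atom_def)
  then have "fresh N a' t" using aeq_fresh[OF aeq_ab.IH] by blast
  then show ?case using h2 aeq_ab.hyps by (simp add: aeq.aeq_ab)
next
  case (aeq_susp \<pi> \<pi>' X)
  then show ?case by (metis aeq.aeq_susp)
next
  case (aeq_fn ts ts' f)
  then have "list_all2 (aeq N) ts' ts" by (auto simp: list_all2_conv_all_nth)
  then show ?case by (rule aeq.aeq_fn)
qed

lemma aeq_trans_aux: "\<forall>t2 t3. aeq N t1 t2 \<longrightarrow> aeq N t2 t3 \<longrightarrow> aeq N t1 t3"
proof (induction t1)
  case (Fn f ts)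
  show ?case
  proof (intro allI impI)
    fix t2 t3 assume h1: "aeq N (Fn f ts) t2" and h2: "aeq N t2 t3"
    from h1 obtain ts2 where t2: "t2 = Fn f ts2" "list_all2 (aeq N) ts ts2" by (auto elim: aeq_FnE)
    from h2 t2 obtain ts3 where t3: "t3 = Fn f ts3" "list_all2 (aeq N) ts2 ts3" by (auto elim: aeq_FnE)
    have "list_all2 (aeq N) ts ts3"
      using t2(2) t3(2) Fn.IH unfolding list_all2_conv_all_nth by (metis nth_mem)
    then show "aeq N (Fn f ts) t3" unfolding t3 by (rule aeq.aeq_fn)
  qed
next
  case (At x)
  then show ?case by (auto elim: aeq_AtE)
next
  case (Ab a s1)
  show ?case
  proof (intro allI impI)
    fix t2 t3 assume h1: "aeq N (Ab a s1) t2" and h2: "aeq N t2 t3"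
    from h1 obtain b s2 where t2: "t2 = Ab b s2" by (auto elim: aeq_AbE)
    from h2 t2 obtain c s3 where t3: "t3 = Ab c s3" by (auto elim: aeq_AbE)
    have A: "(a = b \<and> aeq N s1 s2) \<or> (a \<noteq> b \<and> aeq N s1 (perm_trm [(a, b)] s2) \<and> fresh N a s2)"
      using h1 t2 aeq_Ab_iff by metis
    have B: "(b = c \<and> aeq N s2 s3) \<or> (b \<noteq> c \<and> aeq N s2 (perm_trm [(b, c)] s3) \<and> fresh N b s3)"
      using h2 t2 t3 aeq_Ab_iff by metis
    have "aeq N (Ab a s1) (Ab c s3)"
    proof (cases "a = b")
      case True
      then show ?thesis
      proof (cases "b = c")
        case True
        have "aeq N s1 s2" "aeq N s2 s3" using A B \<open>a = b\<close> True by auto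
        then have "aeq N s1 s3" using Ab.IH by blast
        then show ?thesis using \<open>a = b\<close> True by (simp add: aeq.aeq_ab_eq)
      next
        case False
        have "aeq N s1 s2" "aeq N s2 (perm_trm [(b, c)] s3)" "fresh N b s3"
          using A B \<open>a = b\<close> False by auto
        then have "aeq N s1 (perm_trm [(b, c)] s3)" using Ab.IH by blast
        then show ?thesis using \<open>a = b\<close> False \<open>fresh N b s3\<close> aeq.aeq_ab by metis
      qed
    next
      case False
      then have s12: "aeq N s1 (perm_trm [(a, b)] s2)" and fa: "fresh N a s2" using A by auto
      show ?thesis
      proof (cases "b = c")
        case True
        then have "aeq N s2 s3" using B by auto
        then have "aeq N (perm_trm [(a, b)] s2) (perm_trm [(a, b)] s3)" by (rule aeq_perm)
        then have "aeq N s1 (perm_trm [(a, b)] s3)" using s12 Ab.IH by iprover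
        moreover have "fresh N a s3" using aeq_fresh[OF \<open>aeq N s2 s3\<close> fa] .
        ultimately show ?thesis using \<open>a \<noteq> b\<close> True aeq.aeq_ab by metis
      next
        case False
        then have s23: "aeq N s2 (perm_trm [(b, c)] s3)" and fb: "fresh N b s3" using B by auto
        have "aeq N (perm_trm [(a, b)] s2) (perm_trm [(a, b)] (perm_trm [(b, c)] s3))"
          using s23 by (rule aeq_perm)
        then have s13: "aeq N s1 (perm_trm [(a, b)] (perm_trm [(b, c)] s3))" using s12 Ab.IH by blast
        show ?thesis
        proof (cases "a = c")
          case True
          have "aeq N s1 s3"
          proof (rule aeq_weq[OF s13 weq_refl])
            have "weq (perm_trm ([(a, b)] @ [(b, c)]) s3) (perm_trm [] s3)"
              by (rule weq_perm[OF weq_refl]) (auto simp: fun_eq_iff swap_atom_def True)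
            then show "weq (perm_trm [(a, b)] (perm_trm [(b, c)] s3)) s3"
              by (simp only: perm_trm_append perm_trm_Nil)
          qed
          then show ?thesis using True by (simp add: aeq.aeq_ab_eq)
        next
          case False
          have "fresh N a (perm_trm [(b, c)] s3)" using aeq_fresh[OF s23 fa] .
          then have fa3: "fresh N a s3" using \<open>a \<noteq> b\<close> \<open>a \<noteq> c\<close>
            by (simp add: fresh_perm perm_inv_def swap_atom_def)
          have "aeq N (perm_trm ([(a, b)] @ [(b, c)]) s3) (perm_trm [(a, c)] s3)"
          proof (rule aeq_ds, intro allI impI)
            fix x assume "perm_atom ([(a, b)] @ [(b, c)]) x \<noteq> perm_atom [(a, c)] x"
            then have "x = a \<or> x = b" using \<open>a \<noteq> c\<close> \<open>a \<noteq> b\<close> \<open>b \<noteq> c\<close>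
              by (auto simp: swap_atom_def split: if_splits)
            then show "fresh N x s3" using fa3 fb by auto
          qed
          then have "aeq N (perm_trm [(a, b)] (perm_trm [(b, c)] s3)) (perm_trm [(a, c)] s3)"
            by (simp only: perm_trm_append)
          then have "aeq N s1 (perm_trm [(a, c)] s3)"
            using s13 Ab.IH by blast
          then show ?thesis using fa3 False aeq.aeq_ab by metis
        qed
      qed
    qed
    then show "aeq N (Ab a s1) t3" using t3 by simp
  qed
next
  case (Susp \<pi> X)
  show ?case
  proof (intro allI impI)
    fix t2 t3 assume h1: "aeq N (Susp \<pi> X) t2" and h2: "aeq N t2 t3"
    from h1 obtain \<pi>2 where t2: "t2 = Susp \<pi>2 X" "\<forall>a. perm_atom \<pi> a \<noteq> perm_atom \<pi>2 a \<longrightarrow> (a, X) \<in> N"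
      by (auto elim: aeq_SuspE)
    from h2 t2 obtain \<pi>3 where t3: "t3 = Susp \<pi>3 X" "\<forall>a. perm_atom \<pi>2 a \<noteq> perm_atom \<pi>3 a \<longrightarrow> (a, X) \<in> N"
      by (auto elim: aeq_SuspE)
    show "aeq N (Susp \<pi> X) t3" unfolding t3 using t2(2) t3(2) by (intro aeq.aeq_susp) metis
  qed
qed

lemma aeq_trans: "aeq N t1 t2 \<Longrightarrow> aeq N t2 t3 \<Longrightarrow> aeq N t1 t3"
  using aeq_trans_aux by blast

lemma aeq_refl: "aeq N t t"
  by (induction t) (auto intro!: aeq.intros list.rel_refl_strong)

lemma fresh_fa: "fresh N a t \<Longrightarrow> a \<notin> fa_ns t"
  by (induction rule: fresh.induct) auto

lemma fc1_list_complete: "(\<forall>t\<in>set ts. \<exists>D. fc1 a t = Some D \<and> D \<subseteq> N) \<Longrightarrow> \<exists>D. fc1_list a ts = Some D \<and> D \<subseteq> N"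
  by (induction ts) auto

lemma fc1_complete: "fresh N a t \<Longrightarrow> \<exists>D. fc1 a t = Some D \<and> D \<subseteq> N"
proof (induction rule: fresh.induct)
  case (fr_fn ts a f)
  then show ?case using fc1_list_complete[of ts a N] by simp
qed auto

lemma fc1_sound:
  fixes t :: "('a, 'v, 'f) trm" and ts :: "('a, 'v, 'f) trm list"
  shows "fc1 a t = Some D \<Longrightarrow> D \<subseteq> N \<Longrightarrow> fresh N a t"
  "fc1_list a ts = Some D \<Longrightarrow> D \<subseteq> N \<Longrightarrow> \<forall>t\<in>set ts. fresh N a t"
proof (induction a t and a ts arbitrary: D and D rule: fc1_fc1_list.induct)
  case (1 a b)
  then show ?case by (auto split: if_splits)
next
  case (2 a b t)
  then show ?case by (auto split: if_splits)
next
  case (3 a f ts)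
  then show ?case by simp
next
  case (4 a \<pi> X)
  then show ?case by auto
next
  case (5 a)
  then show ?case by simp
next
  case (6 a t ts)
  then show ?case by (auto split: option.splits)
qed

lemma FC_simp: "ctx_subst N \<sigma> = (if \<exists>(a, X)\<in>N. fc1 a (\<sigma> X) = None then None
   else Some (\<Union>(a, X)\<in>N. the (fc1 a (\<sigma> X))))"
  unfolding ctx_subst_def FC_def by (simp add: image_image case_prod_beta)

lemma ctx_subst_SomeD:
  assumes "ctx_subst N \<sigma> = Some \<Delta>" "(a, X) \<in> N"
  shows "\<exists>D. fc1 a (\<sigma> X) = Some D \<and> D \<subseteq> \<Delta>"
proof -
  have nn: "\<not> (\<exists>(a, X)\<in>N. fc1 a (\<sigma> X) = None)" and D: "\<Delta> = (\<Union>(a, X)\<in>N. the (fc1 a (\<sigma> X)))"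
    using assms(1) unfolding FC_simp by (auto split: if_splits)
  have "fc1 a (\<sigma> X) \<noteq> None" using nn assms(2) by blast
  then obtain D where fD: "fc1 a (\<sigma> X) = Some D" by blast
  have "the (fc1 a (\<sigma> X)) \<subseteq> \<Delta>" unfolding D using assms(2) by blast
  then show ?thesis using fD by simp
qed

lemma ctx_subst_fresh: "\<forall>(a, X)\<in>N. fresh G a (\<sigma> X) \<Longrightarrow> \<exists>\<Delta>. ctx_subst N \<sigma> = Some \<Delta> \<and> \<Delta> \<subseteq> G"
proof -
  assume h: "\<forall>(a, X)\<in>N. fresh G a (\<sigma> X)"
  have c: "\<exists>D. fc1 a (\<sigma> X) = Some D \<and> D \<subseteq> G" if "(a, X) \<in> N" for a X
  proof -
    have "fresh G a (\<sigma> X)" using bspec[OF h that] by simp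
    then show ?thesis by (rule fc1_complete)
  qed
  have "\<not> (\<exists>(a, X)\<in>N. fc1 a (\<sigma> X) = None)"
  proof clarify
    fix a X assume "(a, X) \<in> N" "fc1 a (\<sigma> X) = None"
    then show False using c[of a X] by simp
  qed
  moreover have "(\<Union>(a, X)\<in>N. the (fc1 a (\<sigma> X))) \<subseteq> G"
  proof (rule UN_least, clarify)
    fix a X x assume "(a, X) \<in> N" "x \<in> the (fc1 a (\<sigma> X))"
    then show "x \<in> G" using c[of a X] by auto
  qed
  ultimately show ?thesis unfolding FC_simp by simp
qed

lemma swap_sort: "\<forall>(a, b)\<in>set \<pi>. asort \<Sigma> a = asort \<Sigma> b \<Longrightarrow> asort \<Sigma> (perm_atom \<pi> c) = asort \<Sigma> c"
proof (induction \<pi>)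
  case Nil
  then show ?case by simp
next
  case (Cons p \<pi>)
  obtain a b where p: "p = (a, b)" by fastforce
  have ab: "asort \<Sigma> a = asort \<Sigma> b" using Cons.prems p by simp
  have ih: "asort \<Sigma> (perm_atom \<pi> c) = asort \<Sigma> c" using Cons.IH Cons.prems by simp
  have sw: "asort \<Sigma> (swap_atom a b x) = asort \<Sigma> x" for x
    unfolding swap_atom_def using ab by (cases "x = a"; cases "x = b") simp_all
  show ?case unfolding p perm_atom_Cons sw ih ..
qed

lemma perm_wsorted: "wsorted \<Sigma> t s \<Longrightarrow> \<forall>(a, b)\<in>set \<pi>. asort \<Sigma> a = asort \<Sigma> b \<Longrightarrow> wsorted \<Sigma> (perm_trm \<pi> t) s"
proof (induction rule: wsorted.induct)
  case (ws_at a)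
  then show ?case using wsorted.ws_at[of \<Sigma> "perm_atom \<pi> a"] by (simp add: swap_sort)
next
  case (ws_ab t s a)
  then show ?case using wsorted.ws_ab[of \<Sigma> "perm_trm \<pi> t" s "perm_atom \<pi> a"] by (simp add: swap_sort)
next
  case (ws_fn f ss s ts)
  have "list_all2 (wsorted \<Sigma>) (map (perm_trm \<pi>) ts) ss"
    using ws_fn.IH ws_fn.prems unfolding list_all2_map1 list_all2_conv_all_nth by simp
  then show ?case by (simp add: wsorted.ws_fn[OF ws_fn.hyps(1)])
next
  case (ws_susp \<pi>' X)
  then show ?case by (auto intro!: wsorted.ws_susp)
qed

lemma subst_wsorted: "wsorted \<Sigma> t s \<Longrightarrow> is_subst \<Sigma> \<sigma> \<Longrightarrow> wsorted \<Sigma> (subst_trm \<sigma> t) s"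
proof (induction rule: wsorted.induct)
  case (ws_at a)
  then show ?case by (simp add: wsorted.ws_at)
next
  case (ws_ab t s a)
  then show ?case by (simp add: wsorted.ws_ab)
next
  case (ws_fn f ss s ts)
  have "list_all2 (wsorted \<Sigma>) (map (subst_trm \<sigma>) ts) ss"
    using ws_fn.IH ws_fn.prems unfolding list_all2_map1 list_all2_conv_all_nth by simp
  then show ?case by (simp add: wsorted.ws_fn[OF ws_fn.hyps(1)])
next
  case (ws_susp \<pi> X)
  then show ?case by (simp add: perm_wsorted is_subst_def)
qed

lemma subst_cong: "(\<forall>X\<in>vars_trm t. \<sigma> X = \<sigma>' X) \<Longrightarrow> subst_trm \<sigma> t = subst_trm \<sigma>' t"
  by (induction t) auto

theorem lemma2:
  fixes \<Sigma> :: "('a, 'v, 'f, 's) sortsig"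
    and N1 N2 :: "('a, 'v) fctx"
    and t1 t2 :: "('a, 'v, 'f) trm"
  assumes atoms_inf: "\<forall>a. infinite {b. asort \<Sigma> b = asort \<Sigma> a}"
    and tic1: "term_in_ctx \<Sigma> N1 t1"
    and tic2: "term_in_ctx \<Sigma> N2 t2"
    and disj: "(vars_trm t1 \<union> vars_ctx N1) \<inter> (vars_trm t2 \<union> vars_ctx N2) = {}"
  shows "joinable \<Sigma> (N1, t1) (N2, t2) \<longleftrightarrow> nom_unif_solvable \<Sigma> t1 t2 (N1 \<union> N2)"
proof
  assume "joinable \<Sigma> (N1, t1) (N2, t2)"
  then obtain G s \<sigma>1 \<sigma>2 \<Delta>1 \<Delta>2 where
    G: "term_in_ctx \<Sigma> G s" and
    s1: "is_subst \<Sigma> \<sigma>1" "ctx_subst N1 \<sigma>1 = Some \<Delta>1" "\<Delta>1 \<subseteq> G" "aeq G (subst_trm \<sigma>1 t1) s" and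
    s2: "is_subst \<Sigma> \<sigma>2" "ctx_subst N2 \<sigma>2 = Some \<Delta>2" "\<Delta>2 \<subseteq> G" "aeq G (subst_trm \<sigma>2 t2) s"
    unfolding joinable_def tic_le_def by auto
  define V1 where "V1 = vars_trm t1 \<union> vars_ctx N1"
  define \<sigma> where "\<sigma> X = (if X \<in> V1 then \<sigma>1 X else \<sigma>2 X)" for X
  have sub: "is_subst \<Sigma> \<sigma>" using s1(1) s2(1) unfolding is_subst_def \<sigma>_def by auto
  have e1: "subst_trm \<sigma> t1 = subst_trm \<sigma>1 t1" by (rule subst_cong) (simp add: \<sigma>_def V1_def)
  have e2: "subst_trm \<sigma> t2 = subst_trm \<sigma>2 t2" by (rule subst_cong) (use disj in \<open>auto simp: \<sigma>_def V1_def\<close>)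
  have aeq: "aeq G (subst_trm \<sigma> t1) (subst_trm \<sigma> t2)"
    unfolding e1 e2 using aeq_trans[OF s1(4) aeq_sym[OF s2(4)]] .
  have fr: "\<forall>(a, X)\<in>N1 \<union> N2. fresh G a (\<sigma> X)"
  proof (intro ballI, clarify)
    fix a X assume "(a, X) \<in> N1 \<union> N2"
    then show "fresh G a (\<sigma> X)"
    proof
      assume h: "(a, X) \<in> N1"
      then have "X \<in> V1" by (force simp: V1_def vars_ctx_def)
      then have "\<sigma> X = \<sigma>1 X" by (simp add: \<sigma>_def)
      moreover obtain D where "fc1 a (\<sigma>1 X) = Some D" "D \<subseteq> \<Delta>1" using ctx_subst_SomeD[OF s1(2) h] by blast
      ultimately show ?thesis using fc1_sound(1) s1(3) by fastforce
    next
      assume h: "(a, X) \<in> N2"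
      then have "X \<in> vars_ctx N2" by (force simp: vars_ctx_def)
      then have "X \<notin> V1" using disj by (auto simp: V1_def)
      then have "\<sigma> X = \<sigma>2 X" by (simp add: \<sigma>_def)
      moreover obtain D where "fc1 a (\<sigma>2 X) = Some D" "D \<subseteq> \<Delta>2" using ctx_subst_SomeD[OF s2(2) h] by blast
      ultimately show ?thesis using fc1_sound(1) s2(3) by fastforce
    qed
  qed
  have "finite G" using G by (simp add: term_in_ctx_def)
  then show "nom_unif_solvable \<Sigma> t1 t2 (N1 \<union> N2)"
    unfolding nom_unif_solvable_def using sub aeq fr by blast
next
  assume "nom_unif_solvable \<Sigma> t1 t2 (N1 \<union> N2)"
  then obtain G \<sigma> where G: "finite G" and sub: "is_subst \<Sigma> \<sigma>"
    and aeq: "aeq G (subst_trm \<sigma> t1) (subst_trm \<sigma> t2)"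
    and fr: "\<forall>(a, X)\<in>N1 \<union> N2. fresh G a (\<sigma> X)"
    unfolding nom_unif_solvable_def by blast
  have fr1: "\<forall>(a, X)\<in>N1. fresh G a (\<sigma> X)" and fr2: "\<forall>(a, X)\<in>N2. fresh G a (\<sigma> X)" using fr by auto
  obtain s where "wsorted \<Sigma> t2 s" using tic2 by (auto simp: term_in_ctx_def)
  then have "wsorted \<Sigma> (subst_trm \<sigma> t2) s" using sub by (rule subst_wsorted)
  then have tic: "term_in_ctx \<Sigma> G (subst_trm \<sigma> t2)"
    using G by (auto simp: term_in_ctx_def)
  have r1: "respects_ctx \<sigma> N1" unfolding respects_ctx_def
  proof clarify
    fix a X assume "(a, X) \<in> N1" "a \<in> fa_ns (\<sigma> X)"
    then show False using fr1 fresh_fa by fastforce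
  qed
  have r2: "respects_ctx \<sigma> N2" unfolding respects_ctx_def
  proof clarify
    fix a X assume "(a, X) \<in> N2" "a \<in> fa_ns (\<sigma> X)"
    then show False using fr2 fresh_fa by fastforce
  qed
  obtain \<Delta>1 where d1: "ctx_subst N1 \<sigma> = Some \<Delta>1" "\<Delta>1 \<subseteq> G" using ctx_subst_fresh[OF fr1] by blast
  obtain \<Delta>2 where d2: "ctx_subst N2 \<sigma> = Some \<Delta>2" "\<Delta>2 \<subseteq> G" using ctx_subst_fresh[OF fr2] by blast
  have l1: "tic_le \<Sigma> (N1, t1) (G, subst_trm \<sigma> t2)"
    unfolding tic_le_def prod.case using sub r1 d1 aeq by (intro exI[of _ \<sigma>]) simp
  have l2: "tic_le \<Sigma> (N2, t2) (G, subst_trm \<sigma> t2)"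
    unfolding tic_le_def prod.case using sub r2 d2 aeq_refl[of G "subst_trm \<sigma> t2"] by (intro exI[of _ \<sigma>]) simp
  show "joinable \<Sigma> (N1, t1) (N2, t2)" unfolding joinable_def using tic l1 l2 by (intro exI conjI)
qed

end
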